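(* Let $F$ be a complete nonarchimedean field with ring of integers $\mathbf{o}_F$ and maximal ideal $m_F$, and let $A$ be an $n\times n$ matrix over $F$. Let $\lambda_1,\dots,\lambda_n$ be the eigenvalues of $A$, ordered so that $|\lambda_1|\ge\dots\ge|\lambda_n|$, and let $\sigma_1\ge\dots\ge\sigma_n$ be the singular values of $A$. Suppose that for some $i\in\{1,\dots,n-1\}$ we have \[ |\lambda_i|>|\lambda_{i+1}| \quad\text{and}\quad \sigma_1\cdots\sigma_i=|\lambda_1\cdots\lambda_i|. \] Suppose $U,V\in GL_n(\mathbf{o}_F)$ are congruent to the identity matrix modulo $m_F$. Then the product of the $i$ eigenvalues of $UAV$ of largest norm has norm $|\lambda_1\cdots\lambda_i|$.
   Context: The eigenvalues of a matrix over $F$ are taken in an algebraic extension of $F$, equipped with the unique extension of the norm. The singular values $\sigma_1\ge\dots\ge\sigma_n$ of an $n\times n$ matrix $M$ over $F$ are defined by $\sigma_j=e^{-s_j}$, where $s_1,\dots,s_n$ is the sequence such that, for each $k=1,\dots,n$, $s_1+\dots+s_k$ is the minimum valuation $-\log|\cdot|$ of a $k\times k$ minor of $M$; equivalently $\sigma_1\cdots\sigma_k$ is the maximum norm of a $k\times k$ minor of $M$. *)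

theory Defs
  imports "Jordan_Normal_Form.Char_Poly" "Jordan_Normal_Form.DL_Submatrix"
begin

definition nonarch_abs :: "('a::field \<Rightarrow> real) \<Rightarrow> bool" where
  "nonarch_abs v \<longleftrightarrow>
     (\<forall>x. v x \<ge> 0) \<and> (\<forall>x. v x = 0 \<longleftrightarrow> x = 0) \<and>
     (\<forall>x y. v (x * y) = v x * v y) \<and>
     (\<forall>x y. v (x + y) \<le> max (v x) (v y))"

definition abs_complete :: "('a::field \<Rightarrow> real) \<Rightarrow> bool" where
  "abs_complete v \<longleftrightarrow>
     (\<forall>X :: nat \<Rightarrow> 'a.
        (\<forall>e>0. \<exists>N. \<forall>m\<ge>N. \<forall>k\<ge>N. v (X m - X k) < e) \<longrightarrow>
        (\<exists>L. \<forall>e>0. \<exists>N. \<forall>m\<ge>N. v (X m - L) < e))"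

definition complete_nonarch_field :: "('a::field \<Rightarrow> real) \<Rightarrow> bool" where
  "complete_nonarch_field v \<longleftrightarrow> nonarch_abs v \<and> abs_complete v"

definition valued_alg_ext ::
    "('f::field \<Rightarrow> real) \<Rightarrow> ('f \<Rightarrow> 'k::field) \<Rightarrow> ('k \<Rightarrow> real) \<Rightarrow> bool" where
  "valued_alg_ext vF \<iota> vK \<longleftrightarrow>
     \<iota> 0 = 0 \<and> \<iota> 1 = 1 \<and> (\<forall>a b. \<iota> (a + b) = \<iota> a + \<iota> b) \<and>
     (\<forall>a b. \<iota> (a * b) = \<iota> a * \<iota> b) \<and>
     (\<forall>x::'k. \<exists>p::'f poly. p \<noteq> 0 \<and> poly (map_poly \<iota> p) x = 0) \<and>
     nonarch_abs vK \<and> (\<forall>a. vK (\<iota> a) = vF a)"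

definition sorted_eigenvalues ::
    "('f::field \<Rightarrow> 'k::field) \<Rightarrow> ('k \<Rightarrow> real) \<Rightarrow> 'f mat \<Rightarrow> 'k list \<Rightarrow> bool" where
  "sorted_eigenvalues \<iota> vK A ls \<longleftrightarrow>
     length ls = dim_row A \<and>
     char_poly (map_mat \<iota> A) = (\<Prod>l\<leftarrow>ls. [:- l, 1:]) \<and>
     sorted_wrt (\<lambda>a b. vK a \<ge> vK b) ls"

text \<open>Product "\<sigma>_1 \<cdots> \<sigma>_k" of the k largest singular values: the maximum
  absolute value of a "k \<times> k" minor of A.\<close>
definition sv_prod :: "('f::field \<Rightarrow> real) \<Rightarrow> nat \<Rightarrow> 'f mat \<Rightarrow> real" where
  "sv_prod v k A = Max {v (det (submatrix A I J)) | I J.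
      I \<subseteq> {..<dim_row A} \<and> J \<subseteq> {..<dim_col A} \<and> card I = k \<and> card J = k}"

text \<open>U lies in "GL_n(o_F)" and is congruent to the identity modulo "m_F".\<close>
definition unipotent_mod_m :: "('f::field \<Rightarrow> real) \<Rightarrow> nat \<Rightarrow> 'f mat \<Rightarrow> bool" where
  "unipotent_mod_m v n U \<longleftrightarrow>
     U \<in> carrier_mat n n \<and>
     (\<forall>i<n. \<forall>j<n. v (U $$ (i,j)) \<le> 1) \<and> v (det U) = 1 \<and>
     (\<forall>i<n. \<forall>j<n. v (U $$ (i,j) - (1\<^sub>m n) $$ (i,j)) < 1)"

end

theory Submission
  imports Defs
begin

lemma pick_bij:
  assumes "finite L"
  shows "bij_betw (pick L) {0..<card L} L"
proof -
  have inj: "inj_on (pick L) {0..<card L}"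
  proof (rule inj_onI, rule ccontr)
    fix x y assume xy: "x \<in> {0..<card L}" "y \<in> {0..<card L}" "pick L x = pick L y" "x \<noteq> y"
    show False
    proof (cases "x < y")
      case True thus False using pick_mono[of y L x] xy by simp
    next
      case False hence "y < x" using xy by simp
      thus False using pick_mono[of x L y] xy by simp
    qed
  qed
  have sub: "pick L ` {0..<card L} \<subseteq> L" by (rule image_subsetI, rule pick_in_set, simp)
  have "card (pick L ` {0..<card L}) = card L" using card_image[OF inj] by simp
  hence "pick L ` {0..<card L} = L" using sub assms card_subset_eq by blast
  with inj show ?thesis unfolding bij_betw_def by simp
qed

lemma pick_idx_less:
  assumes "finite L" "(y::nat) \<in> L"
  shows "card {x\<in>L. x < y} < card L"
proof -
  have "{x\<in>L. x < y} \<subseteq> L" by auto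
  moreover have "y \<notin> {x\<in>L. x < y}" by auto
  ultimately have "{x\<in>L. x < y} \<subset> L" using assms(2) by blast
  thus ?thesis using assms(1) by (rule psubset_card_mono[rotated])
qed

lemma submatrix_carrier:
  assumes "A \<in> carrier_mat n m" "I \<subseteq> {..<n}" "J \<subseteq> {..<m}"
  shows "submatrix A I J \<in> carrier_mat (card I) (card J)"
proof -
  have 1: "{i. i < dim_row A \<and> i \<in> I} = I" using assms(1,2) by fastforce
  have 2: "{j. j < dim_col A \<and> j \<in> J} = J" using assms(1,3) by fastforce
  show ?thesis by (rule carrier_matI, unfold dim_submatrix 1 2, rule refl, rule refl)
qed
lemma submatrix_idx:
  assumes "A \<in> carrier_mat n m" "I \<subseteq> {..<n}" "J \<subseteq> {..<m}" "a < card I" "b < card J"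
  shows "submatrix A I J $$ (a,b) = A $$ (pick I a, pick J b)"
proof -
  have 1: "{i. i < dim_row A \<and> i \<in> I} = I" using assms(1,2) by fastforce
  have 2: "{j. j < dim_col A \<and> j \<in> J} = J" using assms(1,3) by fastforce
  show ?thesis by (rule submatrix_index, unfold 1 2, rule assms(4), rule assms(5))
qed
lemma det_submatrix:
  assumes A: "A \<in> carrier_mat n m" and I: "I \<subseteq> {..<n}" and J: "J \<subseteq> {..<m}"
    and cI: "card I = k" and cJ: "card J = k"
  shows "det (submatrix A I J) = (\<Sum>p\<in>{p. p permutes {0..<k}}. signof p *
            (\<Prod>a\<in>{0..<k}. A $$ (pick I a, pick J (p a))))"
proof -
  have C: "submatrix A I J \<in> carrier_mat k k" using submatrix_carrier[OF A I J] cI cJ by simp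
  show ?thesis unfolding det_def'[OF C]
  proof (rule sum.cong[OF refl])
    fix p assume "p \<in> {p. p permutes {0..<k}}"
    hence p: "p permutes {0..<k}" by simp
    have "(\<Prod>a = 0..<k. submatrix A I J $$ (a, p a)) = (\<Prod>a\<in>{0..<k}. A $$ (pick I a, pick J (p a)))"
    proof (rule prod.cong[OF refl])
      fix a assume a: "a \<in> {0..<k}"
      hence pa: "p a < k" using permutes_in_image[OF p] by simp
      show "submatrix A I J $$ (a, p a) = A $$ (pick I a, pick J (p a))"
        by (rule submatrix_idx[OF A I J], insert a pa cI cJ, auto)
    qed
    thus "signof p * (\<Prod>a = 0..<k. submatrix A I J $$ (a, p a)) =
          signof p * (\<Prod>a\<in>{0..<k}. A $$ (pick I a, pick J (p a)))" by simp
  qed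
qed

lemma det_zero_row:
  assumes A: "A \<in> carrier_mat n n" and k: "k < n" and z: "\<And>j. j < n \<Longrightarrow> A $$ (k,j) = 0"
  shows "det A = 0"
  unfolding det_def'[OF A]
proof (rule sum.neutral, rule ballI)
  fix p assume "p \<in> {p. p permutes {0..<n}}"
  hence p: "p permutes {0..<n}" by simp
  have "p k < n" using permutes_in_image[OF p] k by simp
  hence "A $$ (k, p k) = 0" by (rule z)
  hence "(\<Prod>i = 0..<n. A $$ (i, p i)) = 0" using k by (intro prod_zero) auto
  thus "signof p * (\<Prod>i = 0..<n. A $$ (i, p i)) = 0" by simp
qed

lemma mult_entry:
  assumes X: "X \<in> carrier_mat n m" and Y: "Y \<in> carrier_mat m n'" and i: "i < n" and j: "j < n'"
  shows "(X*Y) $$ (i,j) = (\<Sum>l\<in>{0..<m}. X $$ (i,l) * Y $$ (l,j))"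
  using X Y i j by (simp add: scalar_prod_def)

lemma finite_Ls: "finite {L. L \<subseteq> {..<(m::nat)} \<and> card L = k}"
  by (rule finite_subset[of _ "Pow {..<m}"]) auto

definition pidx :: "(nat \<Rightarrow> nat) \<Rightarrow> nat \<Rightarrow> nat \<Rightarrow> nat" where
  "pidx f k a = (if a < k then card {x\<in>f ` {0..<k}. x < f a} else a)"

lemma pidx_props:
  assumes inj: "inj_on f {0..<k}"
  shows "pidx f k permutes {0..<k}"
    "\<And>a. a < k \<Longrightarrow> pick (f ` {0..<k}) (pidx f k a) = f a"
proof -
  let ?L = "f ` {0..<k}"
  have fin: "finite ?L" by simp
  have cL: "card ?L = k" using card_image[OF inj] by simp
  show pk: "\<And>a. a < k \<Longrightarrow> pick ?L (pidx f k a) = f a"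
  proof -
    fix a assume a: "a < k"
    have "f a \<in> ?L" using a by simp
    thus "pick ?L (pidx f k a) = f a" unfolding pidx_def using a pick_card_in_set by simp
  qed
  show "pidx f k permutes {0..<k}"
  proof (rule inj_on_nat_permutes)
    show "inj_on (pidx f k) {0..<k}"
    proof (rule inj_onI)
      fix a b assume a: "a \<in> {0..<k}" and b: "b \<in> {0..<k}" and e: "pidx f k a = pidx f k b"
      have "f a = f b" using pk[of a] pk[of b] a b e by simp
      thus "a = b" using inj a b unfolding inj_on_def by blast
    qed
    show "pidx f k \<in> {0..<k} \<rightarrow> {0..<k}"
    proof
      fix a assume a: "a \<in> {0..<k}"
      have "f a \<in> ?L" using a by simp
      from pick_idx_less[OF fin this] a cL show "pidx f k a \<in> {0..<k}" unfolding pidx_def by simp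
    qed
    show "finite {0..<k}" by simp
    show "\<And>i. i \<notin> {0..<k} \<Longrightarrow> pidx f k i = i" unfolding pidx_def by simp
  qed
qed

lemma cauchy_binet:
  fixes X Y :: "'a::comm_ring_1 mat"
  assumes X: "X \<in> carrier_mat n m" and Y: "Y \<in> carrier_mat m n'"
    and I: "I \<subseteq> {..<n}" and J: "J \<subseteq> {..<n'}" and cI: "card I = k" and cJ: "card J = k"
  shows "det (submatrix (X*Y) I J) =
    (\<Sum>L \<in> {L. L \<subseteq> {..<m} \<and> card L = k}. det (submatrix X I L) * det (submatrix Y L J))"
proof -
  let ?K = "{0..<k}" and ?M = "{0..<m}"
  let ?P = "{p. p permutes ?K}"
  let ?F = "PiE ?K (\<lambda>_. ?M)"
  let ?Inj = "{f \<in> ?F. inj_on f ?K}"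
  let ?Ls = "{L. L \<subseteq> {..<m} \<and> card L = k}"
  define pI where "pI = pick I"
  define pJ where "pJ = pick J"
  have XY: "X * Y \<in> carrier_mat n n'" using X Y by simp
  have pIn: "\<And>a. a < k \<Longrightarrow> pI a < n" unfolding pI_def using I cI pick_in_set[of _ I] by force
  have pJn: "\<And>a. a < k \<Longrightarrow> pJ a < n'" unfolding pJ_def using J cJ pick_in_set[of _ J] by force
  define G where "G f = (\<Sum>p\<in>?P. signof p * (\<Prod>a\<in>?K. Y $$ (f a, pJ (p a))))" for f
  have "det (submatrix (X*Y) I J) = (\<Sum>p\<in>?P. signof p * (\<Prod>a\<in>?K. (X*Y) $$ (pI a, pJ (p a))))"
    unfolding pI_def pJ_def by (rule det_submatrix[OF XY I J cI cJ])
  also have "\<dots> = (\<Sum>p\<in>?P. signof p * (\<Prod>a\<in>?K. \<Sum>l\<in>?M. X $$ (pI a, l) * Y $$ (l, pJ (p a))))"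
  proof (rule sum.cong[OF refl])
    fix p assume "p \<in> ?P"
    hence p: "p permutes ?K" by simp
    have "(\<Prod>a\<in>?K. (X*Y) $$ (pI a, pJ (p a))) = (\<Prod>a\<in>?K. \<Sum>l\<in>?M. X $$ (pI a, l) * Y $$ (l, pJ (p a)))"
    proof (rule prod.cong[OF refl])
      fix a assume a: "a \<in> ?K"
      have "p a < k" using permutes_in_image[OF p] a by simp
      thus "(X*Y) $$ (pI a, pJ (p a)) = (\<Sum>l\<in>?M. X $$ (pI a, l) * Y $$ (l, pJ (p a)))"
        using mult_entry[OF X Y pIn pJn] a by simp
    qed
    thus "signof p * (\<Prod>a\<in>?K. (X*Y) $$ (pI a, pJ (p a))) =
          signof p * (\<Prod>a\<in>?K. \<Sum>l\<in>?M. X $$ (pI a, l) * Y $$ (l, pJ (p a)))" by simp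
  qed
  also have "\<dots> = (\<Sum>p\<in>?P. signof p * (\<Sum>f\<in>?F. \<Prod>a\<in>?K. X $$ (pI a, f a) * Y $$ (f a, pJ (p a))))"
    by (subst prod_sum_PiE, auto)
  also have "\<dots> = (\<Sum>p\<in>?P. \<Sum>f\<in>?F. (\<Prod>a\<in>?K. X $$ (pI a, f a)) * (signof p * (\<Prod>a\<in>?K. Y $$ (f a, pJ (p a)))))"
    by (simp add: sum_distrib_left prod.distrib ac_simps)
  also have "\<dots> = (\<Sum>f\<in>?F. \<Sum>p\<in>?P. (\<Prod>a\<in>?K. X $$ (pI a, f a)) * (signof p * (\<Prod>a\<in>?K. Y $$ (f a, pJ (p a)))))"
    by (rule sum.swap)
  also have "\<dots> = (\<Sum>f\<in>?F. (\<Prod>a\<in>?K. X $$ (pI a, f a)) * G f)"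
    unfolding G_def by (simp add: sum_distrib_left)
  finally have step1: "det (submatrix (X*Y) I J) = (\<Sum>f\<in>?F. (\<Prod>a\<in>?K. X $$ (pI a, f a)) * G f)" .
  have Gdet: "G f = det (mat k k (\<lambda>(a,b). Y $$ (f a, pJ b)))" for f
    unfolding G_def
    by (subst det_def'[of _ k], simp, rule sum.cong[OF refl], rule arg_cong[of _ _ "\<lambda>x. _ * x"],
      rule prod.cong[OF refl], insert permutes_in_image, auto)
  have G0: "G f = 0" if f: "f \<in> ?F - ?Inj" for f
  proof -
    from f obtain a b where ab: "a \<in> ?K" "b \<in> ?K" "a \<noteq> b" "f a = f b" unfolding inj_on_def by blast
    show ?thesis unfolding Gdet
      by (rule det_identical_rows[OF _ ab(3)], insert ab, auto intro!: eq_vecI)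
  qed
  define pf where "pf f = pidx f k" for f
  have Ginj: "G f = signof (pf f) * det (submatrix Y (f ` ?K) J)" if f: "f \<in> ?Inj" for f
  proof -
    let ?L = "f ` ?K"
    have inj: "inj_on f ?K" using f by simp
    have cL: "card ?L = k" using card_image[OF inj] by simp
    have LM: "?L \<subseteq> {..<m}" using f by auto
    have YL: "submatrix Y ?L J \<in> carrier_mat k k" using submatrix_carrier[OF Y LM J] cL cJ by simp
    note pp = pidx_props[OF inj, folded pf_def]
    have "mat k k (\<lambda>(a,b). Y $$ (f a, pJ b)) = mat k k (\<lambda>(a,b). submatrix Y ?L J $$ (pf f a, b))"
    proof (rule eq_matI, simp_all)
      fix a b assume a: "a < k" and b: "b < k"
      have "pf f a < k" using permutes_in_image[OF pp(1)] a by simp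
      hence "submatrix Y ?L J $$ (pf f a, b) = Y $$ (pick ?L (pf f a), pick J b)"
        using submatrix_idx[OF Y LM J] cL cJ b by simp
      thus "Y $$ (f a, pJ b) = submatrix Y ?L J $$ (pf f a, b)" using pp(2)[OF a] unfolding pJ_def by simp
    qed
    thus ?thesis unfolding Gdet using det_permute_rows[OF YL pp(1)] by simp
  qed
  have finF: "finite ?F" by (rule finite_PiE) auto
  have "(\<Sum>f\<in>?F. (\<Prod>a\<in>?K. X $$ (pI a, f a)) * G f) =
      (\<Sum>f\<in>?F - ?Inj. (\<Prod>a\<in>?K. X $$ (pI a, f a)) * G f) + (\<Sum>f\<in>?Inj. (\<Prod>a\<in>?K. X $$ (pI a, f a)) * G f)"
    by (subst sum.subset_diff[of ?Inj ?F], insert finF, auto)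
  also have "(\<Sum>f\<in>?F - ?Inj. (\<Prod>a\<in>?K. X $$ (pI a, f a)) * G f) = 0"
    by (rule sum.neutral, insert G0, auto)
  also have "(\<Sum>f\<in>?Inj. (\<Prod>a\<in>?K. X $$ (pI a, f a)) * G f) =
     (\<Sum>f\<in>?Inj. (\<Prod>a\<in>?K. X $$ (pI a, f a)) * (signof (pf f) * det (submatrix Y (f ` ?K) J)))"
    by (rule sum.cong[OF refl], insert Ginj, auto)
  also have "\<dots> = (\<Sum>(L,q)\<in>Sigma ?Ls (\<lambda>_. ?P).
        (\<Prod>a\<in>?K. X $$ (pI a, pick L (q a))) * (signof q * det (submatrix Y L J)))"
  proof (rule sym, rule sum.reindex_bij_witness[where i = "\<lambda>f. (f ` ?K, pf f)" and j = "\<lambda>(L,q). restrict (\<lambda>a. pick L (q a)) ?K"])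
    fix Lq assume Lq: "Lq \<in> Sigma ?Ls (\<lambda>_. ?P)"
    obtain L q where Lq': "Lq = (L,q)" by fastforce
    have L: "L \<subseteq> {..<m}" "card L = k" and q: "q permutes ?K" using Lq Lq' by auto
    have finL: "finite L" using L(1) finite_subset by blast
    have qK: "\<And>a. a \<in> ?K \<Longrightarrow> q a \<in> ?K" using permutes_in_image[OF q] by simp
    have pickL: "\<And>a. a \<in> ?K \<Longrightarrow> pick L (q a) \<in> L" using qK L(2) pick_in_set by fastforce
    define f where "f = restrict (\<lambda>a. pick L (q a)) ?K"
    have img: "f ` ?K = L"
    proof -
      have "f ` ?K = pick L ` (q ` ?K)" unfolding f_def by auto
      also have "q ` ?K = ?K" using permutes_image[OF q] .
      also have "pick L ` ?K = L" using pick_bij[OF finL] L(2) unfolding bij_betw_def by simp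
      finally show ?thesis .
    qed
    have injf: "inj_on f ?K"
    proof (rule inj_onI)
      fix a b assume a: "a \<in> ?K" and b: "b \<in> ?K" and e: "f a = f b"
      have "pick L (q a) = pick L (q b)" using e a b unfolding f_def by simp
      hence "q a = q b" using pick_bij[OF finL] qK[OF a] qK[OF b] L(2) unfolding bij_betw_def inj_on_def by blast
      thus "a = b" using permutes_inj[OF q] unfolding inj_def by blast
    qed
    have pfq: "pf f = q"
    proof
      fix a show "pf f a = q a"
      proof (cases "a < k")
        case True
        have "pf f a = card {x\<in>f ` ?K. x < f a}" unfolding pf_def pidx_def using True by simp
        also have "\<dots> = card {x\<in>L. x < pick L (q a)}" unfolding img using True unfolding f_def by simp
        also have "\<dots> = q a" using card_pick[of "q a" L] qK[of a] True L(2) by simp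
        finally show ?thesis .
      next
        case False thus ?thesis unfolding pf_def pidx_def using q unfolding permutes_def by simp
      qed
    qed
    show "(\<lambda>f. (f ` ?K, pf f)) (case Lq of (L, q) \<Rightarrow> restrict (\<lambda>a. pick L (q a)) ?K) = Lq"
      using img pfq unfolding Lq' f_def by simp
    show "(case Lq of (L, q) \<Rightarrow> restrict (\<lambda>a. pick L (q a)) ?K) \<in> ?Inj"
      using injf pickL L(1) unfolding Lq' f_def[symmetric] by (auto simp: f_def, meson lessThan_iff subsetD)
    show "(\<Prod>a\<in>?K. X $$ (pI a, (case Lq of (L, q) \<Rightarrow> restrict (\<lambda>a. pick L (q a)) ?K) a)) *
         (signof (pf (case Lq of (L, q) \<Rightarrow> restrict (\<lambda>a. pick L (q a)) ?K)) *
          det (submatrix Y ((case Lq of (L, q) \<Rightarrow> restrict (\<lambda>a. pick L (q a)) ?K) ` ?K) J)) =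
         (case Lq of (L, q) \<Rightarrow> (\<Prod>a\<in>?K. X $$ (pI a, pick L (q a))) * (signof q * det (submatrix Y L J)))"
      unfolding Lq' f_def[symmetric] using img pfq by (simp add: f_def)
  next
    fix f assume f: "f \<in> ?Inj"
    let ?L = "f ` ?K"
    have inj: "inj_on f ?K" using f by simp
    have cL: "card ?L = k" using card_image[OF inj] by simp
    have LM: "?L \<subseteq> {..<m}" using f by auto
    note pp = pidx_props[OF inj, folded pf_def]
    show "(\<lambda>f. (f ` ?K, pf f)) f \<in> Sigma ?Ls (\<lambda>_. ?P)" using cL LM pp(1) by simp
    show "(case (\<lambda>f. (f ` ?K, pf f)) f of (L, q) \<Rightarrow> restrict (\<lambda>a. pick L (q a)) ?K) = f"
    proof
      fix a show "(case (\<lambda>f. (f ` ?K, pf f)) f of (L, q) \<Rightarrow> restrict (\<lambda>a. pick L (q a)) ?K) a = f a"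
        using pp(2)[of a] f by (cases "a < k", auto simp: PiE_def extensional_def)
    qed
  qed
  also have "\<dots> = (\<Sum>L\<in>?Ls. \<Sum>q\<in>?P. (\<Prod>a\<in>?K. X $$ (pI a, pick L (q a))) * (signof q * det (submatrix Y L J)))"
    by (rule sum.Sigma[symmetric], rule finite_Ls, simp add: finite_permutations)
  also have "\<dots> = (\<Sum>L\<in>?Ls. det (submatrix X I L) * det (submatrix Y L J))"
  proof (rule sum.cong[OF refl])
    fix L assume L: "L \<in> ?Ls"
    have "det (submatrix X I L) = (\<Sum>q\<in>?P. signof q * (\<Prod>a\<in>?K. X $$ (pI a, pick L (q a))))"
      unfolding pI_def by (rule det_submatrix[OF X I _ cI], insert L, auto)
    thus "(\<Sum>q\<in>?P. (\<Prod>a\<in>?K. X $$ (pI a, pick L (q a))) * (signof q * det (submatrix Y L J))) =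
        det (submatrix X I L) * det (submatrix Y L J)"
      by (simp add: sum_distrib_left sum_distrib_right ac_simps)
  qed
  finally show ?thesis using step1 by simp
qed

lemma inv_exists:
  fixes A :: "'a::field mat"
  assumes A: "A \<in> carrier_mat n n" and d: "det A \<noteq> 0"
  shows "\<exists>B. B \<in> carrier_mat n n \<and> A * B = 1\<^sub>m n \<and> B * A = 1\<^sub>m n"
proof -
  have "A \<in> Units (ring_mat TYPE('a) n undefined)" by (rule det_non_zero_imp_unit[OF A d])
  thus ?thesis unfolding Units_def ring_mat_def by auto
qed

lemma eigvec_completion:
  fixes v :: "'a::field vec"
  assumes v: "v \<in> carrier_vec N" and nz: "v \<noteq> 0\<^sub>v N"
  shows "\<exists>P Q. P \<in> carrier_mat N N \<and> Q \<in> carrier_mat N N \<and> P * Q = 1\<^sub>m N \<and> Q * P = 1\<^sub>m N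
     \<and> col P 0 = v"
proof -
  obtain j where j: "j < N" "v $ j \<noteq> 0"
  proof (rule ccontr)
    assume "\<not> thesis"
    hence "\<And>j. j < N \<Longrightarrow> v $ j = 0" using that by blast
    hence "v = 0\<^sub>v N" using v by (intro eq_vecI) auto
    thus False using nz by simp
  qed
  define t where "t = Transposition.transpose 0 j"
  have N0: "0 < N" using j by simp
  have t: "t permutes {0..<N}" unfolding t_def by (rule permutes_swap_id, insert j N0, auto)
  have tt: "\<And>a. t (t a) = a" unfolding t_def by (simp add: transpose_def)
  have tlt: "\<And>a. a < N \<Longrightarrow> t a < N" using permutes_in_image[OF t] by simp
  define R where "R = mat N N (\<lambda>(a,b). if b = 0 then v $ (t a) else if a = b then 1 else 0)"
  have R: "R \<in> carrier_mat N N" unfolding R_def by simp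
  have "det R = prod_list (diag_mat R)"
    by (rule det_lower_triangular[OF _ R], auto simp: R_def)
  also have "\<dots> = (\<Prod>i = 0..<N. R $$ (i,i))" unfolding prod_list_diag_prod using R by simp
  also have "\<dots> = (\<Prod>i = 0..<N. if i = 0 then v $ j else 1)"
    by (rule prod.cong, auto simp: R_def t_def)
  also have "\<dots> = v $ j" using N0 by (simp add: prod.If_cases)
  finally have dR: "det R = v $ j" .
  define P where "P = mat N N (\<lambda>(a,b). R $$ (t a, b))"
  have P: "P \<in> carrier_mat N N" unfolding P_def by simp
  have "det P = signof t * det R" unfolding P_def by (rule det_permute_rows[OF R t])
  hence dP: "det P \<noteq> 0" using dR j by (simp add: sign_def)
  from inv_exists[OF P dP] obtain Q where Q: "Q \<in> carrier_mat N N" "P * Q = 1\<^sub>m N" "Q * P = 1\<^sub>m N" by blast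
  have "col P 0 = v"
    by (rule eq_vecI, insert v N0 tlt, auto simp: P_def R_def tt)
  thus ?thesis using P Q by blast
qed

lemma char_poly_1x1:
  assumes "C1 = mat 1 1 (\<lambda>_. (m::'a::field))"
  shows "char_poly C1 = [:-m, 1:]"
proof -
  have C: "C1 \<in> carrier_mat 1 1" using assms by simp
  have ut: "upper_triangular C1" using assms unfolding upper_triangular_def by simp
  have "diag_mat C1 = [m]" using assms unfolding diag_mat_def by simp
  thus ?thesis using char_poly_upper_triangular[OF C ut] by simp
qed

lemma triangularize:
  fixes B :: "'a::field mat"
  assumes "B \<in> carrier_mat n n" "char_poly B = (\<Prod>l\<leftarrow>ls. [:-l, 1:])"
  shows "\<exists>P Q T. P \<in> carrier_mat n n \<and> Q \<in> carrier_mat n n \<and> T \<in> carrier_mat n n \<and>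
    P * Q = 1\<^sub>m n \<and> Q * P = 1\<^sub>m n \<and> B = P * T * Q \<and>
    (\<forall>a b. b < a \<longrightarrow> a < n \<longrightarrow> T $$ (a,b) = 0) \<and> (\<forall>j<n. T $$ (j,j) = ls ! j)"
  using assms
proof (induction n arbitrary: B ls)
  case 0
  have "B = 1\<^sub>m 0 * 1\<^sub>m 0 * 1\<^sub>m 0" using 0 by (intro eq_matI) auto
  thus ?case by (intro exI[of _ "1\<^sub>m 0"]) auto
next
  case (Suc n B ls)
  let ?N = "Suc n"
  have B: "B \<in> carrier_mat ?N ?N" using Suc by simp
  obtain mu rest where ls: "ls = mu # rest"
  proof (cases ls)
    case Nil
    have "degree (char_poly B) = ?N" using degree_monic_char_poly[OF B] by simp
    with Suc(3) Nil show ?thesis by simp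
  qed
  have cpB: "char_poly B = [:-mu, 1:] * (\<Prod>l\<leftarrow>rest. [:-l, 1:])" using Suc(3) ls by simp
  have "poly (char_poly B) mu = 0" unfolding cpB by simp
  hence "eigenvalue B mu" using eigenvalue_root_char_poly[OF B] by simp
  then obtain v where ev: "eigenvector B v mu" unfolding eigenvalue_def by blast
  have v: "v \<in> carrier_vec ?N" "v \<noteq> 0\<^sub>v ?N" "B *\<^sub>v v = mu \<cdot>\<^sub>v v"
    using ev B unfolding eigenvector_def by auto
  from eigvec_completion[OF v(1,2)] obtain P1 Q1 where
    P1: "P1 \<in> carrier_mat ?N ?N" and Q1: "Q1 \<in> carrier_mat ?N ?N" and
    PQ1: "P1 * Q1 = 1\<^sub>m ?N" and QP1: "Q1 * P1 = 1\<^sub>m ?N" and cP1: "col P1 0 = v" by blast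
  define C where "C = Q1 * B * P1"
  have C: "C \<in> carrier_mat ?N ?N" unfolding C_def using P1 Q1 B by simp
  have CC: "C = Q1 * (B * P1)" unfolding C_def by (rule assoc_mult_mat[OF Q1 B P1])
  have BP1: "B * P1 \<in> carrier_mat ?N ?N" using B P1 by simp
  have "col C 0 = Q1 *\<^sub>v col (B * P1) 0" unfolding CC by (rule col_mult2[OF Q1 BP1], simp)
  also have "col (B * P1) 0 = B *\<^sub>v col P1 0" by (rule col_mult2[OF B P1], simp)
  also have "Q1 *\<^sub>v (B *\<^sub>v col P1 0) = mu \<cdot>\<^sub>v (Q1 *\<^sub>v col P1 0)" unfolding cP1 v(3) using mult_mat_vec[OF Q1 v(1)] by simp
  also have "Q1 *\<^sub>v col P1 0 = col (Q1 * P1) 0" by (rule col_mult2[symmetric, OF Q1 P1], simp)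
  also have "\<dots> = unit_vec ?N 0" unfolding QP1 by simp
  finally have colC: "col C 0 = mu \<cdot>\<^sub>v unit_vec ?N 0" .
  have C0: "\<And>a. a < ?N \<Longrightarrow> C $$ (a,0) = (if a = 0 then mu else 0)"
  proof -
    fix a assume a: "a < ?N"
    have "C $$ (a,0) = col C 0 $ a" using a C by simp
    thus "C $$ (a,0) = (if a = 0 then mu else 0)" unfolding colC using a by simp
  qed
  define C1 where "C1 = mat 1 1 (\<lambda>_. mu)"
  define C2 where "C2 = mat 1 n (\<lambda>(a,b). C $$ (0, Suc b))"
  define C4 where "C4 = mat n n (\<lambda>(a,b). C $$ (Suc a, Suc b))"
  have C1: "C1 \<in> carrier_mat 1 1" and C2: "C2 \<in> carrier_mat 1 n" and C4: "C4 \<in> carrier_mat n n"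
    unfolding C1_def C2_def C4_def by auto
  have Cblock: "C = four_block_mat C1 C2 (0\<^sub>m n 1) C4"
  proof (rule eq_matI)
    fix a b assume a: "a < dim_row (four_block_mat C1 C2 (0\<^sub>m n 1) C4)"
      and b: "b < dim_col (four_block_mat C1 C2 (0\<^sub>m n 1) C4)"
    hence a': "a < ?N" and b': "b < ?N" using C1 C4 by auto
    show "C $$ (a,b) = four_block_mat C1 C2 (0\<^sub>m n 1) C4 $$ (a,b)"
      using a' b' C0[OF a'] C1 C4
      by (cases a; cases b; auto simp: C1_def C2_def C4_def)
  qed (insert C C1 C4, auto)
  have sim: "similar_mat C B"
    unfolding similar_mat_def similar_mat_wit_def Let_def
    by (rule exI[of _ Q1], rule exI[of _ P1], insert C B P1 Q1 PQ1 QP1, auto simp: C_def)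
  have "[:-mu, 1:] * char_poly C4 = char_poly C"
    unfolding Cblock char_poly_four_block_zeros_col[OF C1 C2 C4] char_poly_1x1[OF C1_def] ..
  also have "\<dots> = char_poly B" by (rule char_poly_similar[OF sim])
  finally have eq: "[:-mu, 1:] * char_poly C4 = [:-mu, 1:] * (\<Prod>l\<leftarrow>rest. [:-l, 1:])" unfolding cpB .
  have nz: "[:-mu, 1:] \<noteq> (0::'a poly)" by simp
  have "char_poly C4 = (\<Prod>l\<leftarrow>rest. [:-l, 1:])" using eq unfolding mult_left_cancel[OF nz] .
  from Suc.IH[OF C4 this] obtain P2 Q2 T2 where
    P2: "P2 \<in> carrier_mat n n" and Q2: "Q2 \<in> carrier_mat n n" and T2: "T2 \<in> carrier_mat n n" and
    PQ2: "P2 * Q2 = 1\<^sub>m n" and QP2: "Q2 * P2 = 1\<^sub>m n" and C4eq: "C4 = P2 * T2 * Q2" and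
    ut2: "\<forall>a b. b < a \<longrightarrow> a < n \<longrightarrow> T2 $$ (a,b) = 0" and dg2: "\<forall>j<n. T2 $$ (j,j) = rest ! j"
    by blast
  define D where "D = four_block_mat (1\<^sub>m 1) (0\<^sub>m 1 n) (0\<^sub>m n 1) P2"
  define D' where "D' = four_block_mat (1\<^sub>m 1) (0\<^sub>m 1 n) (0\<^sub>m n 1) Q2"
  define T where "T = four_block_mat C1 (C2 * P2) (0\<^sub>m n 1) T2"
  have D: "D \<in> carrier_mat ?N ?N" and D': "D' \<in> carrier_mat ?N ?N" and T: "T \<in> carrier_mat ?N ?N"
    unfolding D_def D'_def T_def using P2 Q2 T2 C1 by auto
  have DD': "D * D' = 1\<^sub>m ?N" unfolding D_def D'_def
    by (subst mult_four_block_mat[of _ 1 1 _ n _ n], insert P2 Q2 PQ2, auto)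
  have D'D: "D' * D = 1\<^sub>m ?N" unfolding D_def D'_def
    by (subst mult_four_block_mat[of _ 1 1 _ n _ n], insert P2 Q2 QP2, auto)
  have "D * T = four_block_mat C1 (C2 * P2) (0\<^sub>m n 1) (P2 * T2)" unfolding D_def T_def
    by (subst mult_four_block_mat[of _ 1 1 _ n _ n], insert P2 T2 C1 C2, auto)
  hence "D * T * D' = four_block_mat C1 (C2 * P2) (0\<^sub>m n 1) (P2 * T2) * D'" by simp
  also have "\<dots> = four_block_mat C1 (C2 * P2 * Q2) (0\<^sub>m n 1) (P2 * T2 * Q2)" unfolding D'_def
    by (subst mult_four_block_mat[of _ 1 1 _ n _ n], insert P2 Q2 T2 C1 C2, auto)
  also have "C2 * P2 * Q2 = C2" using C2 P2 Q2 PQ2 by simp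
  also have "P2 * T2 * Q2 = C4" using C4eq by simp
  finally have DTD: "D * T * D' = C" using Cblock by simp
  define P where "P = P1 * D"
  define Q where "Q = D' * Q1"
  have P: "P \<in> carrier_mat ?N ?N" and Q: "Q \<in> carrier_mat ?N ?N" unfolding P_def Q_def using P1 D D' Q1 by auto
  have PQ: "P * Q = 1\<^sub>m ?N"
  proof -
    have "P * Q = P1 * (D * D') * Q1" unfolding P_def Q_def using P1 D D' Q1
      by (simp add: assoc_mult_mat[of _ ?N ?N _ ?N _ ?N])
    thus ?thesis unfolding DD' using P1 Q1 PQ1 by simp
  qed
  have QP: "Q * P = 1\<^sub>m ?N"
  proof -
    have "Q * P = D' * (Q1 * P1) * D" unfolding P_def Q_def using P1 D D' Q1
      by (simp add: assoc_mult_mat[of _ ?N ?N _ ?N _ ?N])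
    thus ?thesis unfolding QP1 using D D' D'D by simp
  qed
  have BPTQ: "B = P * T * Q"
  proof -
    have "P * T * Q = P1 * (D * T * D') * Q1" unfolding P_def Q_def using P1 D D' Q1 T
      by (simp add: assoc_mult_mat[of _ ?N ?N _ ?N _ ?N])
    also have "\<dots> = P1 * Q1 * B * (P1 * Q1)" unfolding DTD C_def using P1 Q1 B
      by (simp add: assoc_mult_mat[of _ ?N ?N _ ?N _ ?N])
    also have "\<dots> = B" unfolding PQ1 using B by simp
    finally show ?thesis by simp
  qed
  have ut: "\<forall>a b. b < a \<longrightarrow> a < ?N \<longrightarrow> T $$ (a,b) = 0"
  proof (intro allI impI)
    fix a b assume ba: "b < a" and a: "a < ?N"
    then obtain a' where a': "a = Suc a'" by (cases a) auto
    show "T $$ (a,b) = 0"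
    proof (cases b)
      case 0 thus ?thesis using a a' C1 T2 by (simp add: T_def)
    next
      case (Suc b')
      have "T2 $$ (a', b') = 0" using ut2 ba a a' Suc by simp
      moreover have "dim_row T2 = n" "dim_col T2 = n" using T2 by auto
      moreover have "b' < n" using ba a a' Suc by simp
      ultimately show ?thesis using a a' Suc by (simp add: T_def C1_def)
    qed
  qed
  have dg: "\<forall>j<?N. T $$ (j,j) = ls ! j"
  proof (intro allI impI)
    fix j assume j: "j < ?N"
    show "T $$ (j,j) = ls ! j"
    proof (cases j)
      case 0 thus ?thesis using C1 T2 by (simp add: T_def C1_def ls)
    next
      case (Suc j')
      moreover have "dim_row T2 = n" "dim_col T2 = n" using T2 by auto
      ultimately show ?thesis using j dg2 by (simp add: T_def ls C1_def)
    qed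
  qed
  show ?case using P Q T PQ QP BPTQ ut dg by blast
qed

abbreviation Ls :: "nat \<Rightarrow> nat \<Rightarrow> nat set set" where
  "Ls N k \<equiv> {L. L \<subseteq> {..<N} \<and> card L = k}"

lemma Ls_finite_mem: "L \<in> Ls N k \<Longrightarrow> finite L"
  using finite_subset[of L "{..<N}"] by auto

lemma pick_lt_N: "L \<in> Ls N k \<Longrightarrow> a < k \<Longrightarrow> pick L a < N"
  using pick_in_set[of a L] by auto

lemma S0_mem: "k \<le> N \<Longrightarrow> {0..<k} \<in> Ls N k" by auto

lemma pick_surj:
  assumes L: "L \<in> Ls N k" and x: "x \<in> L"
  shows "\<exists>a<k. pick L a = x"
proof -
  have "pick L ` {0..<card L} = L" using pick_bij[OF Ls_finite_mem[OF L]] by (rule bij_betw_imp_surj_on)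
  hence "x \<in> pick L ` {0..<card L}" using x by simp
  then obtain a where "a \<in> {0..<card L}" "x = pick L a" by (rule imageE)
  thus ?thesis using L by auto
qed

lemma pick_inj:
  assumes L: "L \<in> Ls N k" and a: "a < k" and b: "b < k"
  shows "pick L a = pick L b \<longleftrightarrow> a = b"
proof -
  have inj: "inj_on (pick L) {0..<card L}" using pick_bij[OF Ls_finite_mem[OF L]] by (rule bij_betw_imp_inj_on)
  show ?thesis using inj_on_eq_iff[OF inj, of a b] a b L by simp
qed

lemma Ls_sub_eq:
  assumes L': "L' \<in> Ls N k" and L: "L \<in> Ls N k" and sub: "L' \<subseteq> L"
  shows "L' = L"
  by (rule card_subset_eq[OF Ls_finite_mem[OF L] sub], insert L L', simp)

lemma det_sub_one:
  assumes L': "L' \<in> Ls N k" and L: "L \<in> Ls N k"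
  shows "det (submatrix (1\<^sub>m N :: 'a::comm_ring_1 mat) L' L) = (if L' = L then 1 else 0)"
proof -
  have O: "(1\<^sub>m N :: 'a mat) \<in> carrier_mat N N" by simp
  have L'N: "L' \<subseteq> {..<N}" and LN: "L \<subseteq> {..<N}" using L L' by auto
  have C: "submatrix (1\<^sub>m N :: 'a mat) L' L \<in> carrier_mat k k" using submatrix_carrier[OF O L'N LN] L L' by simp
  have idx: "\<And>a b. a < k \<Longrightarrow> b < k \<Longrightarrow> submatrix (1\<^sub>m N :: 'a mat) L' L $$ (a,b) = (if pick L' a = pick L b then 1 else 0)"
    using submatrix_idx[OF O L'N LN] L L' pick_lt_N[OF L'] pick_lt_N[OF L] by simp
  show ?thesis
  proof (cases "L' = L")
    case True
    have "submatrix (1\<^sub>m N :: 'a mat) L' L = 1\<^sub>m k"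
    proof (rule eq_matI)
      fix a b assume "a < dim_row (1\<^sub>m k :: 'a mat)" "b < dim_col (1\<^sub>m k :: 'a mat)"
      hence a: "a < k" and b: "b < k" by auto
      have "pick L a = pick L b \<longleftrightarrow> a = b" by (rule pick_inj[OF L a b])
      thus "submatrix (1\<^sub>m N :: 'a mat) L' L $$ (a,b) = 1\<^sub>m k $$ (a,b)" using idx[OF a b] a b True by simp
    qed (insert C, auto)
    thus ?thesis using True by simp
  next
    case False
    have fin': "finite L'" using Ls_finite_mem[OF L'] .
    have "\<not> L' \<subseteq> L"
    proof
      assume "L' \<subseteq> L"
      hence "L' = L" by (rule Ls_sub_eq[OF L' L])
      thus False using False by simp
    qed
    then obtain x where x: "x \<in> L'" "x \<notin> L" by blast
    obtain a where a: "a < k" "pick L' a = x" using pick_surj[OF L' x(1)] by blast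
    have "det (submatrix (1\<^sub>m N :: 'a mat) L' L) = 0"
    proof (rule det_zero_row[OF C a(1)])
      fix b assume b: "b < k"
      have "pick L b \<in> L" using pick_in_set[of b L] b L by auto
      thus "submatrix (1\<^sub>m N :: 'a mat) L' L $$ (a,b) = 0" using idx[OF a(1) b] a x by auto
    qed
    thus ?thesis using False by simp
  qed
qed

definition utri :: "nat \<Rightarrow> 'a::zero mat \<Rightarrow> bool" where
  "utri N T \<longleftrightarrow> (\<forall>a b. b < a \<longrightarrow> a < N \<longrightarrow> T $$ (a,b) = 0)"

lemma det_sub_utri_diag:
  assumes T: "T \<in> carrier_mat N N" and ut: "utri N T" and L: "L \<in> Ls N k"
  shows "det (submatrix T L L) = (\<Prod>l\<in>L. T $$ (l,l))"
proof -
  have LN: "L \<subseteq> {..<N}" using L by auto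
  have C: "submatrix T L L \<in> carrier_mat k k" using submatrix_carrier[OF T LN LN] L by simp
  have idx: "\<And>a b. a < k \<Longrightarrow> b < k \<Longrightarrow> submatrix T L L $$ (a,b) = T $$ (pick L a, pick L b)"
    using submatrix_idx[OF T LN LN] L by simp
  have "upper_triangular (submatrix T L L)"
    unfolding upper_triangular_def
  proof (intro allI impI)
    fix a b assume a: "a < dim_row (submatrix T L L)" and ba: "b < a"
    hence a': "a < k" using C by simp
    have "pick L b < pick L a" using pick_mono[of a L b] a' ba L by simp
    thus "submatrix T L L $$ (a,b) = 0" using idx[OF a'] a' ba ut pick_lt_N[OF L a'] unfolding utri_def by simp
  qed
  hence "det (submatrix T L L) = prod_list (diag_mat (submatrix T L L))" using det_upper_triangular C by blast
  also have "\<dots> = (\<Prod>a = 0..<k. T $$ (pick L a, pick L a))" unfolding prod_list_diag_prod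
    using C idx by simp
  also have "\<dots> = (\<Prod>l\<in>L. T $$ (l,l))"
    using prod.reindex_bij_betw[OF pick_bij[OF Ls_finite_mem[OF L]], of "\<lambda>l. T $$ (l,l)"] L by simp
  finally show ?thesis .
qed


lemma det_sub_utri_zero:
  assumes T: "T \<in> carrier_mat N N" and ut: "utri N T" and L: "L \<in> Ls N k" and kN: "k \<le> N"
    and ne: "L \<noteq> {0..<k}"
  shows "det (submatrix T L {0..<k}) = 0"
proof -
  have LN: "L \<subseteq> {..<N}" using L by auto
  have S0N: "{0..<k} \<subseteq> {..<N}" using kN by auto
  have C: "submatrix T L {0..<k} \<in> carrier_mat k k" using submatrix_carrier[OF T LN S0N] L by simp
  have "\<not> L \<subseteq> {0..<k}"
  proof
    assume "L \<subseteq> {0..<k}"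
    hence "L = {0..<k}" by (rule Ls_sub_eq[OF L S0_mem[OF kN]])
    thus False using ne by simp
  qed
  hence "\<exists>x\<in>L. \<not> x < k" by auto
  then obtain x where x: "x \<in> L" "x \<ge> k" by (auto simp: not_less)
  obtain a where a: "a < k" "pick L a = x" using pick_surj[OF L x(1)] by blast
  show ?thesis
  proof (rule det_zero_row[OF C a(1)])
    fix b assume b: "b < k"
    have pb: "pick {0..<k} b < k" using pick_in_set[of b "{0..<k}"] b by auto
    have "submatrix T L {0..<k} $$ (a,b) = T $$ (pick L a, pick {0..<k} b)"
      using submatrix_idx[OF T LN S0N] a b L by simp
    also have "\<dots> = 0" using ut a x pb pick_lt_N[OF L a(1)] unfolding utri_def by simp
    finally show "submatrix T L {0..<k} $$ (a,b) = 0" .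
  qed
qed

context
  fixes B P Q T :: "'a::comm_ring_1 mat" and N :: nat
  assumes P: "P \<in> carrier_mat N N" and Q: "Q \<in> carrier_mat N N" and T: "T \<in> carrier_mat N N"
    and PQ: "P * Q = 1\<^sub>m N" and QP: "Q * P = 1\<^sub>m N" and B: "B = P * T * Q" and ut: "utri N T"
begin

lemma Bc: "B \<in> carrier_mat N N" using P Q T B by simp

lemma trace_compound:
  shows "(\<Sum>S\<in>Ls N k. det (submatrix B S S)) = (\<Sum>L\<in>Ls N k. \<Prod>l\<in>L. T $$ (l,l))"
proof -
  have PT: "P * T \<in> carrier_mat N N" using P T by simp
  have cb1: "det (submatrix B S S) = (\<Sum>L'\<in>Ls N k. (\<Sum>L\<in>Ls N k. det (submatrix P S L) * det (submatrix T L L')) * det (submatrix Q L' S))"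
    if S: "S \<in> Ls N k" for S
  proof -
    have SN: "S \<subseteq> {..<N}" using S by auto
    have "det (submatrix B S S) = (\<Sum>L'\<in>Ls N k. det (submatrix (P * T) S L') * det (submatrix Q L' S))"
      unfolding B by (rule cauchy_binet[OF PT Q SN SN], insert S, auto)
    also have "\<dots> = (\<Sum>L'\<in>Ls N k. (\<Sum>L\<in>Ls N k. det (submatrix P S L) * det (submatrix T L L')) * det (submatrix Q L' S))"
    proof (rule sum.cong[OF refl])
      fix L' assume L': "L' \<in> Ls N k"
      have "det (submatrix (P * T) S L') = (\<Sum>L\<in>Ls N k. det (submatrix P S L) * det (submatrix T L L'))"
        by (rule cauchy_binet[OF P T SN], insert S L', auto)
      thus "det (submatrix (P * T) S L') * det (submatrix Q L' S) =
        (\<Sum>L\<in>Ls N k. det (submatrix P S L) * det (submatrix T L L')) * det (submatrix Q L' S)" by simp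
    qed
    finally show ?thesis .
  qed
  have cb2: "det (submatrix (1\<^sub>m N) L' L) = (\<Sum>S\<in>Ls N k. det (submatrix Q L' S) * det (submatrix P S L))"
    if L': "L' \<in> Ls N k" and L: "L \<in> Ls N k" for L L'
  proof -
    have "det (submatrix (Q * P) L' L) = (\<Sum>S\<in>Ls N k. det (submatrix Q L' S) * det (submatrix P S L))"
      by (rule cauchy_binet[OF Q P], insert L L', auto)
    thus ?thesis unfolding QP .
  qed
  have "(\<Sum>S\<in>Ls N k. det (submatrix B S S)) =
     (\<Sum>S\<in>Ls N k. \<Sum>L'\<in>Ls N k. \<Sum>L\<in>Ls N k. det (submatrix T L L') * (det (submatrix Q L' S) * det (submatrix P S L)))"
    by (rule sum.cong[OF refl], unfold cb1, simp add: sum_distrib_right sum_distrib_left ac_simps)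
  also have "\<dots> = (\<Sum>L'\<in>Ls N k. \<Sum>L\<in>Ls N k. \<Sum>S\<in>Ls N k. det (submatrix T L L') * (det (submatrix Q L' S) * det (submatrix P S L)))"
    by (subst sum.swap, rule sum.cong[OF refl], rule sum.swap)
  also have "\<dots> = (\<Sum>L'\<in>Ls N k. \<Sum>L\<in>Ls N k. det (submatrix T L L') * (if L' = L then 1 else 0))"
    by (intro sum.cong[OF refl], simp only: sum_distrib_left[symmetric], subst cb2[symmetric], auto simp: det_sub_one)
  also have "\<dots> = (\<Sum>L'\<in>Ls N k. det (submatrix T L' L'))"
    by (rule sum.cong[OF refl], simp add: if_distrib finite_Ls cong: if_cong)
  also have "\<dots> = (\<Sum>L\<in>Ls N k. \<Prod>l\<in>L. T $$ (l,l))"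
    by (rule sum.cong[OF refl], rule det_sub_utri_diag[OF T ut], simp)
  finally show ?thesis .
qed

lemma compound_eigen:
  assumes kN: "k \<le> N" and S: "S \<in> Ls N k"
  shows "(\<Sum>L\<in>Ls N k. det (submatrix B S L) * det (submatrix P L {0..<k})) =
         (\<Prod>j\<in>{0..<k}. T $$ (j,j)) * det (submatrix P S {0..<k})"
proof -
  have SN: "S \<subseteq> {..<N}" using S by auto
  have S0N: "{0..<k} \<subseteq> {..<N}" using kN by auto
  have BP: "B * P = P * T"
  proof -
    have "B * P = P * T * (Q * P)" unfolding B using P Q T by (simp add: assoc_mult_mat[of _ N N _ N _ N])
    thus ?thesis unfolding QP using P T by simp
  qed
  have "(\<Sum>L\<in>Ls N k. det (submatrix B S L) * det (submatrix P L {0..<k})) = det (submatrix (B * P) S {0..<k})"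
    by (rule cauchy_binet[OF Bc P SN S0N, symmetric], insert S, auto)
  also have "\<dots> = (\<Sum>L\<in>Ls N k. det (submatrix P S L) * det (submatrix T L {0..<k}))"
    unfolding BP by (rule cauchy_binet[OF P T SN S0N], insert S, auto)
  also have "\<dots> = (\<Sum>L\<in>{{0..<k}}. det (submatrix P S L) * det (submatrix T L {0..<k}))"
    by (rule sum.mono_neutral_right, rule finite_Ls, insert kN det_sub_utri_zero[OF T ut _ kN], auto)
  also have "\<dots> = det (submatrix P S {0..<k}) * (\<Prod>j\<in>{0..<k}. T $$ (j,j))"
    using det_sub_utri_diag[OF T ut S0_mem[OF kN]] by simp
  finally show ?thesis by (simp add: ac_simps)
qed

lemma compound_eigen_nz:
  assumes kN: "k \<le> N"
  shows "\<exists>L\<in>Ls N k. det (submatrix P L {0..<k}) \<noteq> 0"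
proof (rule ccontr)
  assume "\<not> ?thesis"
  hence z: "\<And>L. L \<in> Ls N k \<Longrightarrow> det (submatrix P L {0..<k}) = 0" by blast
  have S0N: "{0..<k} \<subseteq> {..<N}" using kN by auto
  have "det (submatrix (Q * P) {0..<k} {0..<k}) = (\<Sum>L\<in>Ls N k. det (submatrix Q {0..<k} L) * det (submatrix P L {0..<k}))"
    by (rule cauchy_binet[OF Q P S0N S0N], auto)
  also have "\<dots> = 0" using z by simp
  finally have "det (submatrix (1\<^sub>m N :: 'a mat) {0..<k} {0..<k}) = 0" unfolding QP .
  thus False using det_sub_one[OF S0_mem[OF kN] S0_mem[OF kN], where 'a='a] by simp
qed

end

locale nav =
  fixes v :: "'k::field \<Rightarrow> real"
  assumes na: "nonarch_abs v"
begin

lemma vnn: "v x \<ge> 0" using na unfolding nonarch_abs_def by blast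
lemma v0iff: "v x = 0 \<longleftrightarrow> x = 0" using na unfolding nonarch_abs_def by blast
lemma v0[simp]: "v 0 = 0" using v0iff by simp
lemma vmult: "v (x * y) = v x * v y" using na unfolding nonarch_abs_def by blast
lemma vadd: "v (x + y) \<le> max (v x) (v y)" using na unfolding nonarch_abs_def by blast

lemma v1[simp]: "v 1 = 1"
proof -
  have "v 1 = v 1 * v 1" using vmult[of 1 1] by simp
  moreover have "v 1 \<noteq> 0" using v0iff by simp
  ultimately show ?thesis by simp
qed

lemma vneg[simp]: "v (- x) = v x"
proof -
  have "v (-1) * v (-1) = 1" using vmult[of "-1" "-1"] by simp
  hence "v (-1) = 1" using vnn[of "-1"]
    by (metis abs_of_nonneg mult_cancel_right1 real_sqrt_abs2 real_sqrt_one)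
  thus ?thesis using vmult[of "-1" x] by simp
qed

lemma vdiff: "v (x - y) \<le> max (v x) (v y)" using vadd[of x "-y"] by simp

lemma vsum_le:
  assumes "finite A" "0 \<le> M" "\<And>a. a \<in> A \<Longrightarrow> v (f a) \<le> M"
  shows "v (sum f A) \<le> M"
  using assms
proof (induction A rule: finite_induct)
  case (insert x F)
  have "v (sum f (insert x F)) = v (f x + sum f F)" using insert by simp
  also have "\<dots> \<le> max (v (f x)) (v (sum f F))" by (rule vadd)
  also have "\<dots> \<le> M" using insert by simp
  finally show ?case .
qed simp

lemma vsum_less:
  assumes "finite A" "0 < M" "\<And>a. a \<in> A \<Longrightarrow> v (f a) < M"
  shows "v (sum f A) < M"
  using assms
proof (induction A rule: finite_induct)
  case (insert x F)
  have "v (sum f (insert x F)) = v (f x + sum f F)" using insert by simp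
  also have "\<dots> \<le> max (v (f x)) (v (sum f F))" by (rule vadd)
  also have "\<dots> < M" using insert by simp
  finally show ?case .
qed simp

lemma vprod: "v (prod f A) = (\<Prod>a\<in>A. v (f a))"
proof (cases "finite A")
  case True thus ?thesis by (induction A rule: finite_induct) (auto simp: vmult)
qed simp

lemma vprod_list: "v (prod_list xs) = prod_list (map v xs)"
  by (induction xs) (auto simp: vmult)

lemma vsignof[simp]: "v (signof p) = 1"
  by (cases "sign p = 1") (auto simp: sign_def)

lemma vadd_eq:
  assumes "v y < v x"
  shows "v (x + y) = v x"
proof -
  have le: "v (x + y) \<le> v x" using vadd[of x y] assms by simp
  have "v x = v ((x + y) + (- y))" by simp
  also have "\<dots> \<le> max (v (x + y)) (v y)" using vadd[of "x+y" "-y"] by simp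
  finally have "v x \<le> max (v (x + y)) (v y)" .
  thus ?thesis using le assms by linarith
qed

lemma vle1_of_near1:
  assumes "v (x - 1) < 1"
  shows "v x \<le> 1"
proof -
  have "v x = v ((x - 1) + 1)" by simp
  also have "\<dots> \<le> max (v (x - 1)) (v 1)" by (rule vadd)
  finally show ?thesis using assms by simp
qed

lemma vprod_near1:
  assumes "finite A" "\<And>a. a \<in> A \<Longrightarrow> v (f a - 1) < 1"
  shows "v (prod f A - 1) < 1"
  using assms
proof (induction A rule: finite_induct)
  case (insert x F)
  have eq: "prod f (insert x F) - 1 = f x * (prod f F - 1) + (f x - 1)"
    using insert by (simp add: algebra_simps)
  have fx: "v (f x) \<le> 1" "v (f x - 1) < 1" using insert vle1_of_near1 by auto
  have pF: "v (prod f F - 1) < 1" using insert by simp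
  have "v (f x * (prod f F - 1)) = v (f x) * v (prod f F - 1)" by (rule vmult)
  also have "\<dots> \<le> 1 * v (prod f F - 1)" using fx(1) vnn[of "prod f F - 1"] by (rule mult_right_mono)
  finally have "v (f x * (prod f F - 1)) < 1" using pF by simp
  hence "max (v (f x * (prod f F - 1))) (v (f x - 1)) < 1" using fx by simp
  thus ?case unfolding eq using vadd[of "f x * (prod f F - 1)" "f x - 1"] by linarith
qed simp

lemma prod_lt1:
  fixes g :: "'b \<Rightarrow> real"
  assumes "finite A" "a0 \<in> A" "\<And>a. a \<in> A \<Longrightarrow> 0 \<le> g a \<and> g a \<le> 1" "g a0 < 1"
  shows "prod g A < 1"
proof -
  have "prod g A = g a0 * prod g (A - {a0})" using assms(1,2) by (rule prod.remove)
  also have "prod g (A - {a0}) \<le> 1" using assms(3) by (intro prod_le_1) auto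
  hence "g a0 * prod g (A - {a0}) \<le> g a0 * 1" using assms(2,3) by (intro mult_left_mono) auto
  finally show ?thesis using assms(4) by simp
qed

text \<open>Minors of matrices congruent to the identity\<close>

context
  fixes U :: "'k mat" and N :: nat
  assumes U: "U \<in> carrier_mat N N"
    and le1: "\<And>i j. i < N \<Longrightarrow> j < N \<Longrightarrow> v (U $$ (i,j)) \<le> 1"
begin

lemma minor_le1:
  assumes S: "S \<in> Ls N k" and L: "L \<in> Ls N k"
  shows "v (det (submatrix U S L)) \<le> 1"
proof -
  have SN: "S \<subseteq> {..<N}" and LN: "L \<subseteq> {..<N}" and cS: "card S = k" and cL: "card L = k" using S L by auto
  show ?thesis unfolding det_submatrix[OF U SN LN cS cL]
  proof (rule vsum_le)
    show "finite {p. p permutes {0..<k}}" by (simp add: finite_permutations)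
    show "(0::real) \<le> 1" by simp
    fix p assume "p \<in> {p. p permutes {0..<k}}"
    hence p: "p permutes {0..<k}" by simp
    show "v (signof p * (\<Prod>a\<in>{0..<k}. U $$ (pick S a, pick L (p a)))) \<le> 1"
      unfolding vmult vprod vsignof
      using vnn le1 pick_lt_N[OF S] pick_lt_N[OF L] permutes_in_image[OF p]
      by (simp, intro prod_le_1, auto)
  qed
qed

lemma minor_lt1:
  assumes off: "\<And>i j. i < N \<Longrightarrow> j < N \<Longrightarrow> i \<noteq> j \<Longrightarrow> v (U $$ (i,j)) < 1"
    and S: "S \<in> Ls N k" and L: "L \<in> Ls N k" and ne: "S \<noteq> L"
  shows "v (det (submatrix U S L)) < 1"
proof -
  have SN: "S \<subseteq> {..<N}" and LN: "L \<subseteq> {..<N}" and cS: "card S = k" and cL: "card L = k" using S L by auto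
  have "\<not> S \<subseteq> L" using Ls_sub_eq[OF S L] ne by blast
  then obtain x where x: "x \<in> S" "x \<notin> L" by blast
  obtain a0 where a0: "a0 < k" "pick S a0 = x" using pick_surj[OF S x(1)] by blast
  show ?thesis unfolding det_submatrix[OF U SN LN cS cL]
  proof (rule vsum_less)
    show "finite {p. p permutes {0..<k}}" by (simp add: finite_permutations)
    show "(0::real) < 1" by simp
    fix p assume "p \<in> {p. p permutes {0..<k}}"
    hence p: "p permutes {0..<k}" by simp
    have pa0: "p a0 < k" using permutes_in_image[OF p] a0 by simp
    have inL: "pick L (p a0) \<in> L" using pick_in_set[of "p a0" L] pa0 L by simp
    have "v (U $$ (pick S a0, pick L (p a0))) < 1"
      by (rule off, rule pick_lt_N[OF S a0(1)], rule pick_lt_N[OF L pa0], insert inL a0 x, auto)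
    hence "(\<Prod>a = 0..<k. v (U $$ (pick S a, pick L (p a)))) < 1"
      using vnn le1 pick_lt_N[OF S] pick_lt_N[OF L] permutes_in_image[OF p] a0
      by (intro prod_lt1[of _ a0]) auto
    thus "v (signof p * (\<Prod>a\<in>{0..<k}. U $$ (pick S a, pick L (p a)))) < 1"
      unfolding vmult vprod vsignof by simp
  qed
qed

lemma minor_diag:
  assumes off: "\<And>i j. i < N \<Longrightarrow> j < N \<Longrightarrow> i \<noteq> j \<Longrightarrow> v (U $$ (i,j)) < 1"
    and dg: "\<And>i. i < N \<Longrightarrow> v (U $$ (i,i) - 1) < 1"
    and S: "S \<in> Ls N k"
  shows "v (det (submatrix U S S) - 1) < 1"
proof -
  have SN: "S \<subseteq> {..<N}" and cS: "card S = k" using S by auto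
  let ?P = "{p. p permutes {0..<k}}"
  let ?t = "\<lambda>p. signof p * (\<Prod>a = 0..<k. U $$ (pick S a, pick S (p a)))"
  have idP: "id \<in> ?P" by (simp add: permutes_id)
  have "det (submatrix U S S) - 1 = sum ?t ?P - 1" unfolding det_submatrix[OF U SN SN cS cS] using S by simp
  also have "sum ?t ?P = ?t id + sum ?t (?P - {id})" using idP by (subst sum.remove[of _ id]) (auto simp: finite_permutations)
  finally have eq: "det (submatrix U S S) - 1 = (?t id - 1) + sum ?t (?P - {id})" by simp
  have t1: "v (?t id - 1) < 1"
    using vprod_near1[of "{0..<k}" "\<lambda>a. U $$ (pick S a, pick S a)"] dg pick_lt_N[OF S] by simp
  have t2: "v (sum ?t (?P - {id})) < 1"
  proof (rule vsum_less, simp add: finite_permutations, simp)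
    fix p assume "p \<in> ?P - {id}"
    hence p: "p permutes {0..<k}" "p \<noteq> id" by auto
    obtain a0 where a0': "p a0 \<noteq> a0" using p(2) by (metis eq_id_iff)
    have a0: "a0 < k" using a0' p(1) unfolding permutes_def by auto
    have pa0: "p a0 < k" using permutes_in_image[OF p(1)] a0 by simp
    have "pick S a0 \<noteq> pick S (p a0)" using pick_inj[OF S a0 pa0] a0' by auto
    hence "v (U $$ (pick S a0, pick S (p a0))) < 1"
      by (intro off pick_lt_N[OF S a0] pick_lt_N[OF S pa0])
    hence "(\<Prod>a = 0..<k. v (U $$ (pick S a, pick S (p a)))) < 1"
      using vnn le1 pick_lt_N[OF S] permutes_in_image[OF p(1)] a0
      by (intro prod_lt1[of _ a0]) auto
    thus "v (?t p) < 1" unfolding vmult vprod vsignof by simp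
  qed
  show ?thesis unfolding eq using vadd[of "?t id - 1" "sum ?t (?P - {id})"] t1 t2 by linarith
qed

end

lemma eig_bound:
  fixes b :: "'i \<Rightarrow> 'i \<Rightarrow> 'k" and w :: "'i \<Rightarrow> 'k"
  assumes fin: "finite X" and nz: "\<exists>S\<in>X. w S \<noteq> 0"
    and eq: "\<And>S. S \<in> X \<Longrightarrow> (\<Sum>L\<in>X. b S L * w L) = mu * w S"
    and bd: "\<And>S L. S \<in> X \<Longrightarrow> L \<in> X \<Longrightarrow> v (b S L) \<le> M" and M: "0 \<le> M"
  shows "v mu \<le> M"
proof -
  have Xne: "X \<noteq> {}" using nz by blast
  define m where "m = Max ((\<lambda>S. v (w S)) ` X)"
  have "m \<in> (\<lambda>S. v (w S)) ` X" unfolding m_def using fin Xne by (intro Max_in) auto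
  then obtain S0 where S0X: "S0 \<in> X" and m: "m = v (w S0)" by blast
  have mx: "\<And>S. S \<in> X \<Longrightarrow> v (w S) \<le> m" unfolding m_def using fin by (intro Max_ge) auto
  obtain S1 where S1: "S1 \<in> X" "w S1 \<noteq> 0" using nz by blast
  have "0 < v (w S1)" using S1(2) vnn v0iff by (simp add: order_less_le)
  hence mpos: "0 < m" using mx[OF S1(1)] by simp
  have "v mu * m = v (mu * w S0)" unfolding m vmult ..
  also have "\<dots> = v (\<Sum>L\<in>X. b S0 L * w L)" using eq[OF S0X] by simp
  also have "\<dots> \<le> M * m"
  proof (rule vsum_le[OF fin])
    show "0 \<le> M * m" using M mpos by simp
    fix L assume L: "L \<in> X"
    have "v (b S0 L * w L) = v (b S0 L) * v (w L)" by (rule vmult)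
    also have "\<dots> \<le> M * m" using bd[OF S0X L] mx[OF L] vnn M by (intro mult_mono) auto
    finally show "v (b S0 L * w L) \<le> M * m" .
  qed
  finally show ?thesis using mpos by simp
qed

end

lemma prod_list_take:
  "k \<le> length xs \<Longrightarrow> prod_list (take k xs) = (\<Prod>l\<in>{0..<k}. xs ! l)"
proof (induction xs arbitrary: k)
  case Nil thus ?case by simp
next
  case (Cons x xs k)
  show ?case
  proof (cases k)
    case 0 thus ?thesis by simp
  next
    case (Suc k')
    have "prod_list (take k (x # xs)) = x * prod_list (take k' xs)" using Suc by simp
    also have "prod_list (take k' xs) = (\<Prod>l\<in>{0..<k'}. xs ! l)" using Cons Suc by simp
    also have "x * \<dots> = (\<Prod>l\<in>{0..<k}. (x # xs) ! l)"
      unfolding Suc prod.atLeast0_lessThan_Suc_shift by simp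
    finally show ?thesis .
  qed
qed

context nav
begin

definition esym :: "'k list \<Rightarrow> nat \<Rightarrow> 'k" where
  "esym xs k = (\<Sum>L\<in>Ls (length xs) k. \<Prod>l\<in>L. xs ! l)"

context
  fixes xs :: "'k list" and N k :: nat
  assumes len: "length xs = N" and srt: "sorted_wrt (\<lambda>a b. v a \<ge> v b) xs" and k1: "1 \<le> k" and kN: "k \<le> N"
begin

lemma srt_le: "i \<le> j \<Longrightarrow> j < N \<Longrightarrow> v (xs ! j) \<le> v (xs ! i)"
  using srt len unfolding sorted_wrt_iff_nth_less by (cases "i = j") auto

lemma prod_est:
  assumes L: "L \<in> Ls N k"
  shows "(\<Prod>l\<in>L. v (xs ! l)) \<le> (\<Prod>l\<in>{0..<k}. v (xs ! l))"
    "k < N \<Longrightarrow> v (xs ! (k - 1)) > v (xs ! k) \<Longrightarrow> L \<noteq> {0..<k} \<Longrightarrow>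
       (\<Prod>l\<in>L. v (xs ! l)) < (\<Prod>l\<in>{0..<k}. v (xs ! l))"
proof -
  let ?f = "\<lambda>l. v (xs ! l)"
  let ?K = "{0..<k}"
  define C where "C = L \<inter> ?K"
  define D1 where "D1 = L - ?K"
  define D2 where "D2 = ?K - L"
  have finL: "finite L" using Ls_finite_mem[OF L] .
  have fin: "finite C" "finite D1" "finite D2" unfolding C_def D1_def D2_def using finL by auto
  have LU: "L = C \<union> D1" "C \<inter> D1 = {}" unfolding C_def D1_def by auto
  have KU: "?K = C \<union> D2" "C \<inter> D2 = {}" unfolding C_def D2_def by auto
  have pL: "prod ?f L = prod ?f C * prod ?f D1" unfolding LU(1) by (rule prod.union_disjoint, insert fin LU, auto)
  have pK: "prod ?f ?K = prod ?f C * prod ?f D2" unfolding KU(1) by (rule prod.union_disjoint, insert fin KU, auto)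
  have "card L = card C + card D1" unfolding LU(1) by (rule card_Un_disjoint, insert fin LU, auto)
  moreover have "card ?K = card C + card D2" unfolding KU(1) by (rule card_Un_disjoint, insert fin KU, auto)
  ultimately have cD: "card D1 = card D2" using L by simp
  define c where "c = v (xs ! (k - 1))"
  have c0: "0 \<le> c" unfolding c_def by (rule vnn)
  have D1c: "\<And>l. l \<in> D1 \<Longrightarrow> ?f l \<le> c" unfolding c_def D1_def using L k1 by (intro srt_le) auto
  have D2c: "\<And>l. l \<in> D2 \<Longrightarrow> c \<le> ?f l" unfolding c_def D2_def using L k1 kN by (intro srt_le) auto
  have Cnn: "0 \<le> prod ?f C" by (rule prod_nonneg, simp add: vnn)
  have p1: "prod ?f D1 \<le> c ^ card D1"
    using prod_mono[of D1 ?f "\<lambda>_. c"] D1c vnn by simp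
  have p2: "c ^ card D2 \<le> prod ?f D2"
    using prod_mono[of D2 "\<lambda>_. c" ?f] D2c c0 by simp
  have "prod ?f D1 \<le> prod ?f D2" using p1 p2 cD by simp
  thus "(\<Prod>l\<in>L. v (xs ! l)) \<le> (\<Prod>l\<in>{0..<k}. v (xs ! l))" unfolding pL pK using Cnn by (rule mult_left_mono)
  assume kN': "k < N" and gap: "v (xs ! (k - 1)) > v (xs ! k)" and ne: "L \<noteq> {0..<k}"
  define b where "b = v (xs ! k)"
  have bc: "b < c" using gap unfolding b_def c_def .
  have b0: "0 \<le> b" unfolding b_def by (rule vnn)
  have "D1 \<noteq> {}"
  proof
    assume "D1 = {}"
    hence "L \<subseteq> ?K" unfolding D1_def by auto
    hence "L = ?K" by (rule Ls_sub_eq[OF L S0_mem[OF kN]])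
    thus False using ne by simp
  qed
  hence d: "card D1 > 0" using fin by auto
  have D1b: "\<And>l. l \<in> D1 \<Longrightarrow> ?f l \<le> b" unfolding b_def D1_def using L by (intro srt_le) auto
  have p1': "prod ?f D1 \<le> b ^ card D1"
    using prod_mono[of D1 ?f "\<lambda>_. b"] D1b vnn by simp
  have "b ^ card D1 < c ^ card D1" using bc b0 d by (intro power_strict_mono) auto
  hence lt: "prod ?f D1 < prod ?f D2" using p1' p2 cD by simp
  have Cpos: "0 < prod ?f C"
  proof (rule prod_pos)
    fix l assume "l \<in> C"
    hence "c \<le> ?f l" unfolding c_def C_def using k1 kN by (intro srt_le) auto
    thus "0 < ?f l" using bc b0 by simp
  qed
  show "(\<Prod>l\<in>L. v (xs ! l)) < (\<Prod>l\<in>{0..<k}. v (xs ! l))" unfolding pL pK using Cpos lt by simp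
qed

lemma top_pos:
  assumes kN': "k < N" and gap: "v (xs ! (k - 1)) > v (xs ! k)"
  shows "0 < v (\<Prod>l\<in>{0..<k}. xs ! l)"
  unfolding vprod
proof (rule prod_pos)
  fix l assume l: "l \<in> {0..<k}"
  have "v (xs ! (k - 1)) \<le> v (xs ! l)" using l k1 kN by (intro srt_le) auto
  thus "0 < v (xs ! l)" using gap vnn[of "xs ! k"] by simp
qed

lemma esym_le: "v (esym xs k) \<le> v (\<Prod>l\<in>{0..<k}. xs ! l)"
  unfolding esym_def len
proof (rule vsum_le)
  show "finite (Ls N k)" by (rule finite_Ls)
  show "0 \<le> v (\<Prod>l\<in>{0..<k}. xs ! l)" by (rule vnn)
  fix L assume "L \<in> Ls N k"
  thus "v (\<Prod>l\<in>L. xs ! l) \<le> v (\<Prod>l\<in>{0..<k}. xs ! l)" unfolding vprod by (rule prod_est(1))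
qed

lemma esym_eq:
  assumes kN': "k < N" and gap: "v (xs ! (k - 1)) > v (xs ! k)"
  shows "v (esym xs k) = v (\<Prod>l\<in>{0..<k}. xs ! l)"
proof -
  let ?g = "\<lambda>L. \<Prod>l\<in>L. xs ! l"
  have S0: "{0..<k} \<in> Ls N k" using S0_mem[OF kN] .
  have "esym xs k = ?g {0..<k} + sum ?g (Ls N k - {{0..<k}})"
    unfolding esym_def len by (rule sum.remove[OF finite_Ls S0])
  moreover have "v (sum ?g (Ls N k - {{0..<k}})) < v (?g {0..<k})"
  proof (rule vsum_less)
    show "finite (Ls N k - {{0..<k}})" using finite_Ls by simp
    show "0 < v (?g {0..<k})" by (rule top_pos[OF kN' gap])
    fix L assume "L \<in> Ls N k - {{0..<k}}"
    thus "v (?g L) < v (?g {0..<k})" unfolding vprod using prod_est(2)[OF _ kN' gap] by auto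
  qed
  ultimately show ?thesis using vadd_eq by simp
qed

end
end

lemma submatrix_map: "submatrix (map_mat f A) I J = map_mat f (submatrix A I J)"
proof (rule eq_matI)
  show "dim_row (submatrix (map_mat f A) I J) = dim_row (map_mat f (submatrix A I J))"
    by (simp add: dim_submatrix)
  show "dim_col (submatrix (map_mat f A) I J) = dim_col (map_mat f (submatrix A I J))"
    by (simp add: dim_submatrix)
  fix a b assume a: "a < dim_row (map_mat f (submatrix A I J))" and b: "b < dim_col (map_mat f (submatrix A I J))"
  hence a': "a < card {i. i < dim_row A \<and> i \<in> I}" and b': "b < card {j. j < dim_col A \<and> j \<in> J}"
    by (simp_all add: dim_submatrix)
  have a'': "a < card {i. i < dim_row (map_mat f A) \<and> i \<in> I}" and b'': "b < card {j. j < dim_col (map_mat f A) \<and> j \<in> J}"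
    using a' b' by simp_all
  have pa: "pick I a < dim_row A" using pick_le[OF a'] .
  have pb: "pick J b < dim_col A" using pick_le[OF b'] .
  show "submatrix (map_mat f A) I J $$ (a,b) = map_mat f (submatrix A I J) $$ (a,b)"
    unfolding submatrix_index[OF a'' b''] using a b pa pb submatrix_index[OF a' b'] by simp
qed

lemma three_prod_lt:
  fixes x y z M :: real
  assumes "0 \<le> x" "0 \<le> y" "0 \<le> z" "x \<le> 1" "y \<le> M" "z \<le> 1" "x < 1 \<or> z < 1" "0 < M"
  shows "x * y * z < M"
proof -
  have xy: "x * y \<le> x * M" using assms by (intro mult_left_mono) auto
  have yz: "y * z \<le> y * 1" using assms by (intro mult_left_mono) auto
  show ?thesis
  proof (cases "x < 1")
    case True
    have "x * y * z \<le> x * y * 1" using assms by (intro mult_left_mono) auto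
    also have "\<dots> \<le> x * M" using xy by simp
    also have "\<dots> < 1 * M" using True assms by (intro mult_strict_right_mono) auto
    finally show ?thesis by simp
  next
    case False
    hence z: "z < 1" using assms by simp
    have "x * y * z \<le> 1 * y * z" using assms by (intro mult_right_mono) auto
    also have "\<dots> = z * y" by simp
    also have "\<dots> \<le> z * M" using assms by (intro mult_left_mono) auto
    also have "\<dots> < 1 * M" using z assms by (intro mult_strict_right_mono) auto
    finally show ?thesis by simp
  qed
qed

theorem proposition4p3:
  fixes vF :: "'f::field \<Rightarrow> real" and \<iota> :: "'f \<Rightarrow> 'k::field" and vK :: "'k \<Rightarrow> real"
    and n i :: nat and A U V :: "'f mat" and ls mus :: "'k list"
  assumes F: "complete_nonarch_field vF"
    and K: "valued_alg_ext vF \<iota> vK"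
    and A: "A \<in> carrier_mat n n"
    and ls: "sorted_eigenvalues \<iota> vK A ls"
    and i: "1 \<le> i" "i \<le> n - 1"
    and gap: "vK (ls ! (i - 1)) > vK (ls ! i)"
    and sv: "sv_prod vF i A = vK (prod_list (take i ls))"
    and U: "unipotent_mod_m vF n U"
    and V: "unipotent_mod_m vF n V"
    and mus: "sorted_eigenvalues \<iota> vK (U * A * V) mus"
  shows "vK (prod_list (take i mus)) = vK (prod_list (take i ls))"
proof -
  have hom0: "\<iota> 0 = 0" and hom1: "\<iota> 1 = 1" and homadd: "\<And>a b. \<iota> (a + b) = \<iota> a + \<iota> b"
    and hommult: "\<And>a b. \<iota> (a * b) = \<iota> a * \<iota> b" and naK: "nonarch_abs vK" and vext: "\<And>a. vK (\<iota> a) = vF a"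
    using K unfolding valued_alg_ext_def by auto
  interpret h: comm_ring_hom \<iota> by (unfold_locales) (auto simp: hom0 hom1 homadd hommult)
  interpret nav vK by (unfold_locales, rule naK)
  have in_: "i < n" using i by simp
  have Uc: "U \<in> carrier_mat n n" and Vc: "V \<in> carrier_mat n n" using U V unfolding unipotent_mod_m_def by auto
  define A' where "A' = map_mat \<iota> A"
  define U' where "U' = map_mat \<iota> U"
  define V' where "V' = map_mat \<iota> V"
  define B' where "B' = map_mat \<iota> (U * A * V)"
  have A'c: "A' \<in> carrier_mat n n" and U'c: "U' \<in> carrier_mat n n" and V'c: "V' \<in> carrier_mat n n"
    unfolding A'_def U'_def V'_def using A Uc Vc by auto
  have B'eq: "B' = U' * A' * V'" unfolding B'_def U'_def A'_def V'_def
    using h.mat_hom_mult[of "U * A" n n V n] h.mat_hom_mult[of U n n A n] Uc A Vc by simp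
  have B'c: "B' \<in> carrier_mat n n" unfolding B'eq using U'c A'c V'c by simp
  have lenls: "length ls = n" and cpA: "char_poly A' = (\<Prod>l\<leftarrow>ls. [:- l, 1:])"
    and srtls: "sorted_wrt (\<lambda>a b. vK a \<ge> vK b) ls"
    using ls A unfolding sorted_eigenvalues_def A'_def by auto
  have lenmus: "length mus = n" and cpB: "char_poly B' = (\<Prod>l\<leftarrow>mus. [:- l, 1:])"
    and srtmus: "sorted_wrt (\<lambda>a b. vK a \<ge> vK b) mus"
    using mus A Uc unfolding sorted_eigenvalues_def B'_def by auto
  define Sv where "Sv = sv_prod vF i A"
  have subdet: "\<And>M I J. det (submatrix (map_mat \<iota> M) I J) = \<iota> (det (submatrix M I J))"
    unfolding submatrix_map by simp
  have Abd: "vK (det (submatrix A' I J)) \<le> Sv" if I: "I \<in> Ls n i" and J: "J \<in> Ls n i" for I J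
  proof -
    let ?X = "{vF (det (submatrix A I J)) | I J. I \<subseteq> {..<dim_row A} \<and> J \<subseteq> {..<dim_col A} \<and> card I = i \<and> card J = i}"
    have "?X \<subseteq> (\<lambda>(I,J). vF (det (submatrix A I J))) ` (Pow {..<n} \<times> Pow {..<n})" using A by auto
    hence fin: "finite ?X" by (rule finite_subset, simp)
    have "vF (det (submatrix A I J)) \<in> ?X" using I J A by auto
    hence "vF (det (submatrix A I J)) \<le> Max ?X" using fin by simp
    thus ?thesis unfolding A'_def subdet vext Sv_def sv_prod_def .
  qed
  have ptl: "prod_list (take i ls) = (\<Prod>l\<in>{0..<i}. ls ! l)" by (rule prod_list_take, insert lenls in_, simp)
  have topls: "Sv = vK (\<Prod>l\<in>{0..<i}. ls ! l)" unfolding Sv_def sv ptl ..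
  have Svpos: "0 < Sv" unfolding topls by (rule top_pos[OF lenls srtls i(1) less_imp_le[OF in_] in_ gap])
  have esA: "vK (esym ls i) = Sv" unfolding topls by (rule esym_eq[OF lenls srtls i(1) less_imp_le[OF in_] in_ gap])
  obtain PA QA TA where PA: "PA \<in> carrier_mat n n" and QA: "QA \<in> carrier_mat n n" and TA: "TA \<in> carrier_mat n n"
    and PQA: "PA * QA = 1\<^sub>m n" and QPA: "QA * PA = 1\<^sub>m n" and A'eq: "A' = PA * TA * QA"
    and utA: "\<forall>a b. b < a \<longrightarrow> a < n \<longrightarrow> TA $$ (a,b) = 0" and dgA: "\<forall>j<n. TA $$ (j,j) = ls ! j"
    using triangularize[OF A'c cpA] by blast
  obtain PB QB TB where PB: "PB \<in> carrier_mat n n" and QB: "QB \<in> carrier_mat n n" and TB: "TB \<in> carrier_mat n n"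
    and PQB: "PB * QB = 1\<^sub>m n" and QPB: "QB * PB = 1\<^sub>m n" and B'eq2: "B' = PB * TB * QB"
    and utB: "\<forall>a b. b < a \<longrightarrow> a < n \<longrightarrow> TB $$ (a,b) = 0" and dgB: "\<forall>j<n. TB $$ (j,j) = mus ! j"
    using triangularize[OF B'c cpB] by blast
  have utA': "utri n TA" and utB': "utri n TB" unfolding utri_def using utA utB by auto
  have trA: "(\<Sum>S\<in>Ls n i. det (submatrix A' S S)) = esym ls i"
    unfolding trace_compound[OF PA QA TA PQA QPA A'eq utA'] esym_def lenls
    by (rule sum.cong[OF refl], rule prod.cong[OF refl], insert dgA, auto)
  have trB: "(\<Sum>S\<in>Ls n i. det (submatrix B' S S)) = esym mus i"
    unfolding trace_compound[OF PB QB TB PQB QPB B'eq2 utB'] esym_def lenmus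
    by (rule sum.cong[OF refl], rule prod.cong[OF refl], insert dgB, auto)
  have Ule: "\<And>a b. a < n \<Longrightarrow> b < n \<Longrightarrow> vK (U' $$ (a,b)) \<le> 1"
    using U Uc unfolding unipotent_mod_m_def U'_def by (simp add: vext)
  have Vle: "\<And>a b. a < n \<Longrightarrow> b < n \<Longrightarrow> vK (V' $$ (a,b)) \<le> 1"
    using V Vc unfolding unipotent_mod_m_def V'_def by (simp add: vext)
  have Uoff: "\<And>a b. a < n \<Longrightarrow> b < n \<Longrightarrow> a \<noteq> b \<Longrightarrow> vK (U' $$ (a,b)) < 1"
  proof -
    fix a b assume ab: "a < n" "b < n" "a \<noteq> b"
    have "vF (U $$ (a,b) - 1\<^sub>m n $$ (a,b)) < 1" using U ab unfolding unipotent_mod_m_def by blast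
    thus "vK (U' $$ (a,b)) < 1" using ab Uc unfolding U'_def by (simp add: vext)
  qed
  have Voff: "\<And>a b. a < n \<Longrightarrow> b < n \<Longrightarrow> a \<noteq> b \<Longrightarrow> vK (V' $$ (a,b)) < 1"
  proof -
    fix a b assume ab: "a < n" "b < n" "a \<noteq> b"
    have "vF (V $$ (a,b) - 1\<^sub>m n $$ (a,b)) < 1" using V ab unfolding unipotent_mod_m_def by blast
    thus "vK (V' $$ (a,b)) < 1" using ab Vc unfolding V'_def by (simp add: vext)
  qed
  have Udg: "\<And>a. a < n \<Longrightarrow> vK (U' $$ (a,a) - 1) < 1"
  proof -
    fix a assume a: "a < n"
    have "vF (U $$ (a,a) - 1\<^sub>m n $$ (a,a)) < 1" using U a unfolding unipotent_mod_m_def by blast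
    hence "vF (U $$ (a,a) - 1) < 1" using a by simp
    hence "vK (\<iota> (U $$ (a,a) - 1)) < 1" by (simp add: vext)
    thus "vK (U' $$ (a,a) - 1) < 1" using a Uc unfolding U'_def by (simp add: h.hom_minus)
  qed
  have Vdg: "\<And>a. a < n \<Longrightarrow> vK (V' $$ (a,a) - 1) < 1"
  proof -
    fix a assume a: "a < n"
    have "vF (V $$ (a,a) - 1\<^sub>m n $$ (a,a)) < 1" using V a unfolding unipotent_mod_m_def by blast
    hence "vF (V $$ (a,a) - 1) < 1" using a by simp
    hence "vK (\<iota> (V $$ (a,a) - 1)) < 1" by (simp add: vext)
    thus "vK (V' $$ (a,a) - 1) < 1" using a Vc unfolding V'_def by (simp add: h.hom_minus)
  qed
  define u where "u S L = det (submatrix U' S L)" for S L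
  define a where "a S L = det (submatrix A' S L)" for S L
  define w where "w S L = det (submatrix V' S L)" for S L
  have u1: "\<And>S L. S \<in> Ls n i \<Longrightarrow> L \<in> Ls n i \<Longrightarrow> vK (u S L) \<le> 1"
    unfolding u_def by (rule minor_le1[OF U'c Ule])
  have w1: "\<And>S L. S \<in> Ls n i \<Longrightarrow> L \<in> Ls n i \<Longrightarrow> vK (w S L) \<le> 1"
    unfolding w_def by (rule minor_le1[OF V'c Vle])
  have ulow: "\<And>S L. S \<in> Ls n i \<Longrightarrow> L \<in> Ls n i \<Longrightarrow> S \<noteq> L \<Longrightarrow> vK (u S L) < 1"
    unfolding u_def by (rule minor_lt1[OF U'c Ule Uoff])
  have wlow: "\<And>S L. S \<in> Ls n i \<Longrightarrow> L \<in> Ls n i \<Longrightarrow> S \<noteq> L \<Longrightarrow> vK (w S L) < 1"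
    unfolding w_def by (rule minor_lt1[OF V'c Vle Voff])
  have udg: "\<And>S. S \<in> Ls n i \<Longrightarrow> vK (u S S - 1) < 1"
    unfolding u_def by (rule minor_diag[OF U'c Ule Uoff Udg])
  have wdg: "\<And>S. S \<in> Ls n i \<Longrightarrow> vK (w S S - 1) < 1"
    unfolding w_def by (rule minor_diag[OF V'c Vle Voff Vdg])
  have abd: "\<And>S L. S \<in> Ls n i \<Longrightarrow> L \<in> Ls n i \<Longrightarrow> vK (a S L) \<le> Sv"
    unfolding a_def by (rule Abd)
  have UA: "U' * A' \<in> carrier_mat n n" using U'c A'c by simp
  have Bminor: "det (submatrix B' S L) = (\<Sum>L2\<in>Ls n i. (\<Sum>L1\<in>Ls n i. u S L1 * a L1 L2) * w L2 L)"
    if S: "S \<in> Ls n i" and L: "L \<in> Ls n i" for S L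
  proof -
    have SN: "S \<subseteq> {..<n}" and LN: "L \<subseteq> {..<n}" using S L by auto
    have "det (submatrix B' S L) = (\<Sum>L2\<in>Ls n i. det (submatrix (U' * A') S L2) * w L2 L)"
      unfolding B'eq w_def by (rule cauchy_binet[OF UA V'c SN LN], insert S L, auto)
    also have "\<dots> = (\<Sum>L2\<in>Ls n i. (\<Sum>L1\<in>Ls n i. u S L1 * a L1 L2) * w L2 L)"
    proof (rule sum.cong[OF refl])
      fix L2 assume L2: "L2 \<in> Ls n i"
      have "det (submatrix (U' * A') S L2) = (\<Sum>L1\<in>Ls n i. u S L1 * a L1 L2)"
        unfolding u_def a_def by (rule cauchy_binet[OF U'c A'c SN], insert S L2, auto)
      thus "det (submatrix (U' * A') S L2) * w L2 L = (\<Sum>L1\<in>Ls n i. u S L1 * a L1 L2) * w L2 L" by simp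
    qed
    finally show ?thesis .
  qed
  have Bbd: "vK (det (submatrix B' S L)) \<le> Sv" if S: "S \<in> Ls n i" and L: "L \<in> Ls n i" for S L
    unfolding Bminor[OF S L]
  proof (rule vsum_le[OF finite_Ls])
    show "0 \<le> Sv" using Svpos by simp
    fix L2 assume L2: "L2 \<in> Ls n i"
    have "vK (\<Sum>L1\<in>Ls n i. u S L1 * a L1 L2) \<le> Sv"
    proof (rule vsum_le[OF finite_Ls])
      show "0 \<le> Sv" using Svpos by simp
      fix L1 assume L1: "L1 \<in> Ls n i"
      have "vK (u S L1 * a L1 L2) = vK (u S L1) * vK (a L1 L2)" by (rule vmult)
      also have "\<dots> \<le> 1 * Sv" using u1[OF S L1] abd[OF L1 L2] vnn by (intro mult_mono) auto
      finally show "vK (u S L1 * a L1 L2) \<le> Sv" by simp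
    qed
    hence "vK (\<Sum>L1\<in>Ls n i. u S L1 * a L1 L2) * vK (w L2 L) \<le> Sv * 1"
      using w1[OF L2 L] vnn Svpos by (intro mult_mono) auto
    thus "vK ((\<Sum>L1\<in>Ls n i. u S L1 * a L1 L2) * w L2 L) \<le> Sv" unfolding vmult by simp
  qed
  have mu_le: "vK (\<Prod>j\<in>{0..<i}. mus ! j) \<le> Sv"
  proof -
    have iN: "i \<le> n" using in_ by simp
    have eq: "(\<Sum>L\<in>Ls n i. det (submatrix B' S L) * det (submatrix PB L {0..<i})) =
         (\<Prod>j\<in>{0..<i}. mus ! j) * det (submatrix PB S {0..<i})" if S: "S \<in> Ls n i" for S
    proof -
      have "(\<Prod>j\<in>{0..<i}. TB $$ (j,j)) = (\<Prod>j\<in>{0..<i}. mus ! j)" using dgB in_ by (intro prod.cong) auto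
      thus ?thesis using compound_eigen[OF PB QB TB PQB QPB B'eq2 utB' iN S] by simp
    qed
    show ?thesis
      by (rule eig_bound[OF finite_Ls compound_eigen_nz[OF PB QB TB PQB QPB B'eq2 utB' iN] eq Bbd],
        insert Svpos, auto)
  qed
  have diffS: "vK (det (submatrix B' S S) - a S S) < Sv" if S: "S \<in> Ls n i" for S
  proof -
    let ?t = "\<lambda>L2 L1. u S L1 * a L1 L2 * w L2 S - (if L1 = S \<and> L2 = S then a S S else 0)"
    have inner: "(\<Sum>L1\<in>Ls n i. (if L1 = S \<and> L2 = S then a S S else 0)) = (if L2 = S then a S S else 0)" for L2
    proof (cases "L2 = S")
      case True
      have "(\<Sum>L1\<in>Ls n i. (if L1 = S \<and> L2 = S then a S S else 0)) = (\<Sum>L1\<in>Ls n i. (if L1 = S then a S S else 0))"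
        using True by simp
      also have "\<dots> = a S S" using S finite_Ls[of n i] by (simp add: sum.delta)
      finally show ?thesis using True by simp
    qed simp
    have "(\<Sum>L2\<in>Ls n i. \<Sum>L1\<in>Ls n i. (if L1 = S \<and> L2 = S then a S S else 0)) = a S S"
      unfolding inner using S finite_Ls[of n i] by (simp add: sum.delta)
    hence eq: "det (submatrix B' S S) - a S S = (\<Sum>L2\<in>Ls n i. \<Sum>L1\<in>Ls n i. ?t L2 L1)"
      unfolding Bminor[OF S S] by (simp add: sum_subtractf sum_distrib_right)
    show ?thesis unfolding eq
    proof (rule vsum_less[OF finite_Ls Svpos], rule vsum_less[OF finite_Ls Svpos])
      fix L2 L1 assume L2: "L2 \<in> Ls n i" and L1: "L1 \<in> Ls n i"
      show "vK (?t L2 L1) < Sv"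
      proof (cases "L1 = S \<and> L2 = S")
        case True
        have e: "?t L2 L1 = a S S * (u S S * (w S S - 1) + (u S S - 1))" using True by (simp add: algebra_simps)
        have "vK (u S S * (w S S - 1)) = vK (u S S) * vK (w S S - 1)" by (rule vmult)
        also have "\<dots> \<le> 1 * vK (w S S - 1)" using u1[OF S S] vnn by (intro mult_right_mono) auto
        finally have "vK (u S S * (w S S - 1)) < 1" using wdg[OF S] by simp
        hence x1: "vK (u S S * (w S S - 1) + (u S S - 1)) < 1"
          using vadd[of "u S S * (w S S - 1)" "u S S - 1"] udg[OF S] by linarith
        have "vK (?t L2 L1) = vK (a S S) * vK (u S S * (w S S - 1) + (u S S - 1))" unfolding e by (rule vmult)
        also have "\<dots> \<le> Sv * vK (u S S * (w S S - 1) + (u S S - 1))" using abd[OF S S] vnn by (intro mult_right_mono) auto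
        also have "\<dots> < Sv * 1" using x1 Svpos by (intro mult_strict_left_mono) auto
        finally show ?thesis by simp
      next
        case False
        hence e: "?t L2 L1 = u S L1 * a L1 L2 * w L2 S" by (simp only: if_False, simp)
        have "L1 \<noteq> S \<or> L2 \<noteq> S" using False by simp
        hence lt: "vK (u S L1) < 1 \<or> vK (w L2 S) < 1" using ulow[OF S L1] wlow[OF L2 S] by auto
        have "vK (u S L1) * vK (a L1 L2) * vK (w L2 S) < Sv"
          by (rule three_prod_lt, insert vnn u1[OF S L1] abd[OF L1 L2] w1[OF L2 S] lt Svpos, auto)
        thus ?thesis unfolding e vmult .
      qed
    qed
  qed
  have diff: "vK (esym mus i - esym ls i) < Sv"
  proof -
    have "esym mus i - esym ls i = (\<Sum>S\<in>Ls n i. det (submatrix B' S S) - a S S)"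
      unfolding trB[symmetric] trA[symmetric] a_def by (simp add: sum_subtractf)
    also have "vK \<dots> < Sv" by (rule vsum_less[OF finite_Ls Svpos], rule diffS)
    finally show ?thesis .
  qed
  have esB: "vK (esym mus i) = Sv"
  proof -
    have "esym mus i = esym ls i + (esym mus i - esym ls i)" by simp
    also have "vK \<dots> = vK (esym ls i)" by (rule vadd_eq, unfold esA, rule diff)
    finally show ?thesis using esA by simp
  qed
  have mu_ge: "Sv \<le> vK (\<Prod>j\<in>{0..<i}. mus ! j)"
    using esym_le[OF lenmus srtmus i(1) less_imp_le[OF in_]] esB by simp
  have ptm: "prod_list (take i mus) = (\<Prod>l\<in>{0..<i}. mus ! l)" by (rule prod_list_take, insert lenmus in_, simp)
  have "vK (prod_list (take i mus)) = Sv" unfolding ptm using mu_le mu_ge by simp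
  thus ?thesis using sv Sv_def by simp
qed

end
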